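(* Neither the class of all weakly connected frames nor the class of all transitive and weakly connected frames is spi-definable.
   Context: Unimodal setting: frames $(W,R)$ with one binary relation; sp-formulas built from propositional variables and $\top$ by $\wedge$ and $\Diamond$; sp-implications $\sigma\to\tau$, valid in a frame if at every point of every Kripke model over it $\sigma$ true implies $\tau$ true. A class $\mathcal C$ of frames is spi-definable if there is a set $\Sigma$ of sp-implications such that $\mathcal C$ is exactly the class of frames validating every member of $\Sigma$. $R$ is weakly connected if $\forall x,y,z\,(R(x,y)\wedge R(x,z)\to R(y,z)\vee R(z,y)\vee y=z)$. *)

theory Defs
  imports Main
begin

text \<open>Strictly positive (sp-) formulas: built from propositional variables and top
  by conjunction and diamond.\<close>
datatype spf = Var nat | Top | Conj spf spf | Dia spf

type_synonym 'a frame = "'a set \<times> ('a \<times> 'a) set"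

definition is_frame :: "'a frame \<Rightarrow> bool" where
  "is_frame F \<longleftrightarrow> fst F \<noteq> {} \<and> snd F \<subseteq> fst F \<times> fst F"

fun sat :: "'a set \<Rightarrow> ('a \<times> 'a) set \<Rightarrow> (nat \<Rightarrow> 'a set) \<Rightarrow> 'a \<Rightarrow> spf \<Rightarrow> bool" where
  "sat W R V w (Var p) \<longleftrightarrow> w \<in> V p"
| "sat W R V w Top \<longleftrightarrow> True"
| "sat W R V w (Conj a b) \<longleftrightarrow> sat W R V w a \<and> sat W R V w b"
| "sat W R V w (Dia a) \<longleftrightarrow> (\<exists>v\<in>W. (w, v) \<in> R \<and> sat W R V v a)"

definition spi_valid :: "'a frame \<Rightarrow> spf \<times> spf \<Rightarrow> bool" where
  "spi_valid F i \<longleftrightarrow>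
     (\<forall>V. \<forall>w\<in>fst F. sat (fst F) (snd F) V w (fst i) \<longrightarrow> sat (fst F) (snd F) V w (snd i))"

definition spi_definable :: "'a frame set \<Rightarrow> bool" where
  "spi_definable C \<longleftrightarrow>
     (\<exists>\<Sigma> :: (spf \<times> spf) set. \<forall>F. is_frame F \<longrightarrow> (F \<in> C \<longleftrightarrow> (\<forall>i\<in>\<Sigma>. spi_valid F i)))"

definition weakly_connected :: "'a frame \<Rightarrow> bool" where
  "weakly_connected F \<longleftrightarrow>
     (\<forall>x\<in>fst F. \<forall>y\<in>fst F. \<forall>z\<in>fst F. (x, y) \<in> snd F \<and> (x, z) \<in> snd F \<longrightarrow>
        (y, z) \<in> snd F \<or> (z, y) \<in> snd F \<or> y = z)"

definition transitive_frame :: "'a frame \<Rightarrow> bool" where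
  "transitive_frame F \<longleftrightarrow>
     (\<forall>x\<in>fst F. \<forall>y\<in>fst F. \<forall>z\<in>fst F. (x, y) \<in> snd F \<and> (y, z) \<in> snd F \<longrightarrow> (x, z) \<in> snd F)"

end

theory Submission
  imports Defs
begin

definition prodrel :: "('a \<times> 'a) set \<Rightarrow> ('b \<times> 'b) set \<Rightarrow> (('a \<times> 'b) \<times> ('a \<times> 'b)) set" where
  "prodrel R S = {((a,b),(c,d)). (a,c) \<in> R \<and> (b,d) \<in> S}"

lemma sat_hom:
  assumes "\<And>u v. (u,v) \<in> R \<Longrightarrow> (h u, h v) \<in> R'"
    and "\<And>u. u \<in> W \<Longrightarrow> h u \<in> W'"
    and "\<And>p u. u \<in> V p \<Longrightarrow> h u \<in> V' p"
  shows "w \<in> W \<Longrightarrow> sat W R V w \<phi> \<Longrightarrow> sat W' R' V' (h w) \<phi>"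
  using assms by (induction \<phi> arbitrary: w) force+

lemma sat_prod:
  "sat W0 R0 V0 a \<phi> \<Longrightarrow> sat W1 R1 V1 b \<phi> \<Longrightarrow>
   sat (W0 \<times> W1) (prodrel R0 R1) (\<lambda>p. V0 p \<times> V1 p) (a,b) \<phi>"
proof (induction \<phi> arbitrary: a b)
  case (Dia \<phi>)
  then obtain v0 v1 where "v0 \<in> W0" "(a,v0) \<in> R0" "sat W0 R0 V0 v0 \<phi>"
    "v1 \<in> W1" "(b,v1) \<in> R1" "sat W1 R1 V1 v1 \<phi>" by auto
  with Dia.IH show ?case by (auto simp: prodrel_def intro!: bexI[of _ "(v0,v1)"])
qed auto

lemma nondef:
  fixes x y z :: 'a
  assumes d: "x \<noteq> y" "x \<noteq> z" "y \<noteq> z"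
    and G: "({x,y,z},{(x,y),(x,z)}) \<notin> C"
    and F0: "({x,y},{(x,y)}) \<in> C"
    and F1: "({x,y,z},{(x,y),(x,z),(y,z)}) \<in> C"
  shows "\<not> spi_definable C"
proof
  assume "spi_definable C"
  then obtain \<Sigma> where S: "\<forall>F. is_frame F \<longrightarrow> (F \<in> C \<longleftrightarrow> (\<forall>i\<in>\<Sigma>. spi_valid F i))"
    unfolding spi_definable_def by blast
  have "is_frame ({x,y,z},{(x,y),(x,z)})" "is_frame ({x,y},{(x,y)})"
    "is_frame ({x,y,z},{(x,y),(x,z),(y,z)})" by (auto simp: is_frame_def)
  with S G F0 F1 obtain i where i: "i \<in> \<Sigma>" "\<not> spi_valid ({x,y,z},{(x,y),(x,z)}) i"
    and v0: "spi_valid ({x,y},{(x,y)}) i" and v1: "spi_valid ({x,y,z},{(x,y),(x,z),(y,z)}) i"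
    by blast
  then obtain V w where w: "w \<in> {x,y,z}" and sw: "sat {x,y,z} {(x,y),(x,z)} V w (fst i)"
    and nt: "\<not> sat {x,y,z} {(x,y),(x,z)} V w (snd i)"
    unfolding spi_valid_def by auto
  define g where "g u = (if u = z then y else u)" for u
  define V0 where "V0 p = g ` V p" for p
  have gw: "g w \<in> {x,y}" using w by (auto simp: g_def)
  have s0: "sat {x,y} {(x,y)} V0 (g w) (fst i)"
    by (rule sat_hom[OF _ _ _ w sw]) (auto simp: g_def V0_def d)
  have t0: "sat {x,y} {(x,y)} V0 (g w) (snd i)"
    using v0 s0 gw unfolding spi_valid_def by auto
  have s1: "sat {x,y,z} {(x,y),(x,z),(y,z)} V ((\<lambda>u. u) w) (fst i)"
    by (rule sat_hom[OF _ _ _ w sw]) auto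
  have t1: "sat {x,y,z} {(x,y),(x,z),(y,z)} V w (snd i)"
    using v1 s1 w unfolding spi_valid_def by auto
  have tp: "sat ({x,y} \<times> {x,y,z}) (prodrel {(x,y)} {(x,y),(x,z),(y,z)}) (\<lambda>p. V0 p \<times> V p) (g w, w) (snd i)"
    by (rule sat_prod[OF t0 t1])
  define f where "f = (\<lambda>(a::'a,b::'a). if a = x then x else b)"
  have "sat {x,y,z} {(x,y),(x,z)} V (f (g w, w)) (snd i)"
  proof (rule sat_hom[OF _ _ _ _ tp])
    show "\<And>u v. (u,v) \<in> prodrel {(x,y)} {(x,y),(x,z),(y,z)} \<Longrightarrow> (f u, f v) \<in> {(x,y),(x,z)}"
      using d by (auto simp: prodrel_def f_def)
    show "\<And>u. u \<in> {x,y} \<times> {x,y,z} \<Longrightarrow> f u \<in> {x,y,z}" by (auto simp: f_def)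
    show "\<And>p u. u \<in> V0 p \<times> V p \<Longrightarrow> f u \<in> V p"
      using d by (auto simp: f_def V0_def g_def split: if_splits)
    show "(g w, w) \<in> {x,y} \<times> {x,y,z}" using gw w by auto
  qed
  moreover have "f (g w, w) = w" using w d by (auto simp: f_def g_def)
  ultimately show False using nt by simp
qed

theorem proposition9p4:
  assumes "infinite (UNIV :: 'a set)"
  shows "\<not> spi_definable {F :: 'a frame. is_frame F \<and> weakly_connected F}
       \<and> \<not> spi_definable {F :: 'a frame. is_frame F \<and> transitive_frame F \<and> weakly_connected F}"
proof -
  obtain x :: 'a where True by simp
  obtain y :: 'a where y: "y \<notin> {x}" using ex_new_if_finite[OF assms] by blast
  obtain z :: 'a where z: "z \<notin> {x,y}" using ex_new_if_finite[OF assms, of "{x,y}"] by blast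
  have d: "x \<noteq> y" "x \<noteq> z" "y \<noteq> z" using y z by auto
  have nw: "\<not> weakly_connected ({x,y,z},{(x,y),(x,z)})"
    using d unfolding weakly_connected_def by auto
  have f0: "is_frame ({x,y},{(x,y)}) \<and> transitive_frame ({x,y},{(x,y)}) \<and> weakly_connected ({x,y},{(x,y)})"
    using d by (auto simp: is_frame_def transitive_frame_def weakly_connected_def)
  have f1: "is_frame ({x,y,z},{(x,y),(x,z),(y,z)}) \<and> transitive_frame ({x,y,z},{(x,y),(x,z),(y,z)})
     \<and> weakly_connected ({x,y,z},{(x,y),(x,z),(y,z)})"
    using d by (auto simp: is_frame_def transitive_frame_def weakly_connected_def)
  show ?thesis
  proof
    show "\<not> spi_definable {F :: 'a frame. is_frame F \<and> weakly_connected F}"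
      by (rule nondef[OF d]) (use nw f0 f1 in auto)
    show "\<not> spi_definable {F :: 'a frame. is_frame F \<and> transitive_frame F \<and> weakly_connected F}"
      by (rule nondef[OF d]) (use nw f0 f1 in auto)
  qed
qed

end
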